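(* For $n \ge 2$, the path $P_n$ is $\gamma_{\rm tg}$-critical if and only if $n \pmod 6 \in \{2,4\}$.
   Context: Total domination game on a graph $G$ (without isolated vertices): Dominator and Staller alternately choose vertices; each chosen vertex must be adjacent to at least one vertex not yet totally dominated (i.e., not adjacent to any previously chosen vertex); the game ends when no legal move exists. Dominator minimizes, Staller maximizes the number of moves. $\gamma_{\rm tg}(G)$ is the number of moves when Dominator starts and both play optimally. $G|v$ is the graph with vertex $v$ declared already totally dominated (so moves must totally dominate some vertex not yet totally dominated and other than the declared one), and $\gamma_{\rm tg}(G|v)$ is the optimal number of moves of the Dominator-start game on it. $G$ is $\gamma_{\rm tg}$-critical if $\gamma_{\rm tg}(G|v) < \gamma_{\rm tg}(G)$ for every vertex $v$. *)

theory Defs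
  imports Main
begin

text \<open>A graph is given by a finite vertex set V and an adjacency relation E
  (for the paths below: symmetric, irreflexive, no isolated vertices).\<close>

definition nbh :: "'a set \<Rightarrow> ('a \<Rightarrow> 'a \<Rightarrow> bool) \<Rightarrow> 'a \<Rightarrow> 'a set" where
  "nbh V E v = {u \<in> V. E v u}"

text \<open>D = set of vertices already totally dominated (or declared so).
  A vertex v is a legal move if it totally dominates some vertex not in D.\<close>
definition legal :: "'a set \<Rightarrow> ('a \<Rightarrow> 'a \<Rightarrow> bool) \<Rightarrow> 'a set \<Rightarrow> 'a \<Rightarrow> bool" where
  "legal V E D v \<longleftrightarrow> v \<in> V \<and> \<not> nbh V E v \<subseteq> D"

text \<open>Optimal number of remaining moves, with fuel k (each legal move adds a new
  vertex of V to D, so fuel card V suffices); dmin = Dominator to move.\<close>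
fun gval :: "'a set \<Rightarrow> ('a \<Rightarrow> 'a \<Rightarrow> bool) \<Rightarrow> nat \<Rightarrow> bool \<Rightarrow> 'a set \<Rightarrow> nat" where
  "gval V E 0 dmin D = 0"
| "gval V E (Suc k) dmin D =
     (if {v. legal V E D v} = {} then 0
      else if dmin then Min ((\<lambda>v. 1 + gval V E k False (D \<union> nbh V E v)) ` {v. legal V E D v})
      else Max ((\<lambda>v. 1 + gval V E k True (D \<union> nbh V E v)) ` {v. legal V E D v}))"

definition gamma_tg :: "'a set \<Rightarrow> ('a \<Rightarrow> 'a \<Rightarrow> bool) \<Rightarrow> nat" where
  "gamma_tg V E = gval V E (card V) True {}"

text \<open>Game on G|v: vertex v declared already totally dominated.\<close>
definition gamma_tg_decl :: "'a set \<Rightarrow> ('a \<Rightarrow> 'a \<Rightarrow> bool) \<Rightarrow> 'a \<Rightarrow> nat" where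
  "gamma_tg_decl V E v = gval V E (card V) True {v}"

definition tg_critical :: "'a set \<Rightarrow> ('a \<Rightarrow> 'a \<Rightarrow> bool) \<Rightarrow> bool" where
  "tg_critical V E \<longleftrightarrow> (\<forall>v\<in>V. gamma_tg_decl V E v < gamma_tg V E)"

definition path_V :: "nat \<Rightarrow> nat set" where
  "path_V n = {0..<n}"

definition path_E :: "nat \<Rightarrow> nat \<Rightarrow> bool" where
  "path_E i j \<longleftrightarrow> i + 1 = j \<or> j + 1 = i"

end

theory Submission
  imports Defs
begin

definition ff :: "nat \<Rightarrow> nat" where "ff m = (4*m+2) div 3"
definition ffH :: "nat \<Rightarrow> nat" where "ffH m = 2*((2*m+1) div 3)"

fun pot :: "nat \<Rightarrow> bool list \<Rightarrow> nat" where
  "pot k [] = ff k"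
| "pot k (True # w) = pot (Suc k) w"
| "pot k (False # w) = ff k + pot 0 w"

lemma ff0[simp]: "ff 0 = 0" by (simp add: ff_def)

lemma ffb: "4*m \<le> 3*ff m \<and> 3*ff m \<le> 4*m+2" unfolding ff_def by linarith

lemma ffA: "ff i + ff j + 1 \<le> ff (i+2+j) \<and> ff (i+2+j) \<le> ff i + ff j + 3"
proof -
  have "4*i \<le> 3*ff i" "3*ff i \<le> 4*i+2" "4*j \<le> 3*ff j" "3*ff j \<le> 4*j+2" 
    "4*i+4*j+8 \<le> 3*ff (i+2+j)" "3*ff (i+2+j) \<le> 4*i+4*j+10" using ffb[of i] ffb[of j] ffb[of "i+2+j"] by simp_all
  then show ?thesis by linarith
qed

lemma ffB: "ff i + 1 \<le> ff (Suc i) \<and> ff (Suc i) \<le> ff i + 3"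
proof -
  have "4*i \<le> 3*ff i" "3*ff i \<le> 4*i+2" 
    "4*i+4 \<le> 3*ff (Suc i)" "3*ff (Suc i) \<le> 4*i+6" using ffb[of i] ffb[of "Suc i"] by simp_all
  then show ?thesis by linarith
qed

lemma pot_rep: "pot k (replicate m True @ ys) = pot (k+m) ys"
  by (induction m arbitrary: k) auto

lemma pot_app_F: "pot k (xs @ False # ys) = pot k xs + pot 0 ys"
proof (induction xs arbitrary: k)
  case Nil then show ?case by simp
next
  case (Cons a xs) then show ?case by (cases a) auto
qed

lemma pot_rep0[simp]: "pot k (replicate m True) = ff (k+m)"
  using pot_rep[of k m "[]"] by simp

lemma pot_F[simp]: "pot 0 (False # ys) = pot 0 ys" by simp

lemma split_lead: "\<exists>t ys0. ys = replicate t True @ ys0 \<and> (ys0 = [] \<or> hd ys0 = False)"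
proof (induction ys)
  case Nil then show ?case by auto
next
  case (Cons a ys)
  show ?case
  proof (cases a)
    case True
    with Cons obtain t ys0 where "ys = replicate t True @ ys0" "ys0 = [] \<or> hd ys0 = False" by blast
    with True show ?thesis by (intro exI[of _ "Suc t"] exI[of _ ys0]) auto
  next
    case False then show ?thesis by (intro exI[of _ 0] exI[of _ "a#ys"]) auto
  qed
qed

lemma split_trail: "\<exists>xs0 r. xs = xs0 @ replicate r True \<and> (xs0 = [] \<or> last xs0 = False)"
proof (induction xs rule: rev_induct)
  case Nil then show ?case by auto
next
  case (snoc a xs)
  show ?case
  proof (cases a)
    case True
    with snoc obtain r xs0 where "xs = xs0 @ replicate r True" "xs0 = [] \<or> last xs0 = False" by blast
    with True show ?thesis by (intro exI[of _ xs0] exI[of _ "Suc r"]) (auto simp: replicate_append_same)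
  next
    case False then show ?thesis by (intro exI[of _ "xs@[a]"] exI[of _ 0]) auto
  qed
qed

lemma pot_bound: "(xs = [] \<or> last xs = False) \<Longrightarrow> (ys = [] \<or> hd ys = False) \<Longrightarrow>
  pot 0 (xs @ replicate m True @ ys) = pot 0 xs + ff m + pot 0 ys"
proof -
  assume a: "xs = [] \<or> last xs = False" and b: "ys = [] \<or> hd ys = False"
  have r: "pot 0 (replicate m True @ ys) = ff m + pot 0 ys"
    using b by (cases ys) (auto simp: pot_rep)
  show ?thesis
  proof (cases "xs = []")
    case True then show ?thesis using r by simp
  next
    case False
    with a obtain xs0 where xs: "xs = xs0 @ [False]"
      by (metis append_butlast_last_id)
    have "pot 0 (xs @ replicate m True @ ys) = pot 0 xs0 + pot 0 (replicate m True @ ys)"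
      using xs pot_app_F[of 0 xs0] by simp
    moreover have "pot 0 xs = pot 0 xs0" using xs pot_app_F[of 0 xs0 "[]"] by simp
    ultimately show ?thesis using r by simp
  qed
qed

lemma pot_F2: "pot 0 (xs @ False # ys) = pot 0 xs + pot 0 ys" by (rule pot_app_F)

lemma pot_trail: "pot 0 (xs0 @ replicate r True @ zs) = pot 0 xs0 + pot r zs"
  if "xs0 = [] \<or> last xs0 = False"
proof (cases "xs0 = []")
  case True then show ?thesis by (simp add: pot_rep)
next
  case False
  with that obtain x1 where xs: "xs0 = x1 @ [False]" by (metis append_butlast_last_id)
  show ?thesis using xs pot_app_F[of 0 x1] pot_app_F[of 0 x1 "[]"] by (simp add: pot_rep)
qed

lemma pot_lead: "pot k (replicate t True @ ys0) + ff t = pot 0 (replicate t True @ ys0) + ff (k+t)"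
  if "ys0 = [] \<or> hd ys0 = False"
  using that by (cases ys0) (auto simp: pot_rep)

lemma core:
  assumes "a \<or> b"
  shows "pot 0 (xs @ False # False # ys) + 1 \<le> pot 0 (xs @ a # b # ys) \<and>
         pot 0 (xs @ a # b # ys) \<le> pot 0 (xs @ False # False # ys) + 3"
proof -
  obtain xs0 r where xs: "xs = xs0 @ replicate r True" and bx: "xs0 = [] \<or> last xs0 = False"
    using split_trail by blast
  obtain t ys0 where ys: "ys = replicate t True @ ys0" and bY: "ys0 = [] \<or> hd ys0 = False"
    using split_lead by blast
  have E1: "pot 0 (xs @ z) = pot 0 xs0 + pot r z" for z
    using pot_trail[OF bx, of r z] xs by simp
  have E2: "pot k ys + ff t = pot 0 ys + ff (k+t)" for k
    using pot_lead[OF bY, of k t] ys by simp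
  have new: "pot 0 (xs @ False # False # ys) = pot 0 xs0 + ff r + pot 0 ys"
    using E1[of "False # False # ys"] by simp
  show ?thesis
  proof (cases a)
    case True
    show ?thesis
    proof (cases b)
      case True
      have "pot 0 (xs @ a # b # ys) = pot 0 xs0 + pot (r+2) ys"
        using E1[of "a#b#ys"] \<open>a\<close> True by simp
      then have "pot 0 (xs @ a # b # ys) + ff t = pot 0 xs0 + pot 0 ys + ff (r+2+t)"
        using E2[of "r+2"] by simp
      then show ?thesis using new ffA[of r t] by linarith
    next
      case False
      have "pot 0 (xs @ a # b # ys) = pot 0 xs0 + ff (Suc r) + pot 0 ys"
        using E1[of "a#b#ys"] \<open>a\<close> False by simp
      then show ?thesis using new ffB[of r] by linarith
    qed
  next
    case False
    then have bb: b using assms by simp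
    have "pot 0 (xs @ a # b # ys) = pot 0 xs0 + ff r + pot 1 ys"
      using E1[of "a#b#ys"] False bb by simp
    moreover have "pot 1 ys + ff t = pot 0 ys + ff (1+t)" using E2[of 1] by simp
    ultimately show ?thesis using new ffB[of t] by simp
  qed
qed

definition kill :: "nat \<Rightarrow> bool list \<Rightarrow> bool list" where
  "kill g w = (if g = 0 then w else w[g-1 := False])[g := False]"

definition hits :: "nat \<Rightarrow> bool list \<Rightarrow> bool" where
  "hits g w \<longleftrightarrow> (0 < g \<and> g - 1 < length w \<and> w!(g-1)) \<or> (g < length w \<and> w!g)"

lemma length_kill[simp]: "length (kill g w) = length w"
  by (simp add: kill_def)

lemma kill_mid: "kill (Suc (length xs)) (xs @ a # b # ys) = xs @ False # False # ys"
  by (simp add: kill_def list_update_append)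

lemma kill_zero: "kill 0 (b # ys) = False # ys"
  by (simp add: kill_def)

lemma kill_last: "kill (Suc (length xs)) (xs @ [a]) = xs @ [False]"
  by (simp add: kill_def list_update_append)

lemma kill_left: "(xs = [] \<or> last xs = False) \<Longrightarrow> kill (length xs) (xs @ a # ys) = xs @ False # ys"
proof (cases "xs = []")
  case True then show ?thesis by (simp add: kill_def)
next
  case False
  assume "xs = [] \<or> last xs = False"
  with False obtain x1 where xs: "xs = x1 @ [False]" by (metis append_butlast_last_id)
  show ?thesis unfolding xs by (simp add: kill_def list_update_append)
qed

lemma ff_eq0: "ff k = 0 \<longleftrightarrow> k = 0"
  using ffb[of k] by auto

lemma pot_eq0: "pot k w = 0 \<longleftrightarrow> k = 0 \<and> (\<forall>x\<in>set w. \<not> x)"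
proof (induction k w rule: pot.induct)
  case (1 k) then show ?case by (simp add: ff_eq0)
next
  case (2 k w) then show ?case by simp
next
  case (3 k w) then show ?case by (simp add: ff_eq0)
qed

lemma ffHb: "4*m \<le> 3*ffH m + 2 \<and> 3*ffH m \<le> 4*m+2" unfolding ffH_def by linarith

lemma ffHA: "ff i + ff j + 1 \<le> ffH (i+2+j) \<and> ffH (i+2+j) \<le> ff i + ff j + 3"
proof -
  have "4*i \<le> 3*ff i" "3*ff i \<le> 4*i+2" "4*j \<le> 3*ff j" "3*ff j \<le> 4*j+2" 
    "4*i+4*j+8 \<le> 3*ffH (i+2+j) + 2" "3*ffH (i+2+j) \<le> 4*i+4*j+10" using ffb[of i] ffb[of j] ffHb[of "i+2+j"] by simp_all
  then show ?thesis by linarith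
qed

lemma core_gen:
  assumes "hits g w" "g \<le> length w"
  shows "pot 0 (kill g w) + 1 \<le> pot 0 w \<and> pot 0 w \<le> pot 0 (kill g w) + 3"
proof -
  consider "g = 0" | "g = length w" "0 < g" | "0 < g" "g < length w" using assms by linarith
  then show ?thesis
  proof cases
    case 1
    then obtain b ys where w: "w = b # ys" using assms by (cases w) (auto simp: hits_def)
    then have "b" using assms 1 by (simp add: hits_def)
    have "pot 0 ([] @ False # False # ys) + 1 \<le> pot 0 ([] @ False # b # ys) \<and>
         pot 0 ([] @ False # b # ys) \<le> pot 0 ([] @ False # False # ys) + 3"
      by (rule core) (simp add: \<open>b\<close>)
    then show ?thesis using 1 w by (simp add: kill_zero)
  next
    case 2
    then obtain xs a where w: "w = xs @ [a]" by (metis append_butlast_last_id length_greater_0_conv)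
    then have g: "g = Suc (length xs)" using 2 by simp
    have "a" using assms w g by (auto simp: hits_def nth_append)
    have c: "pot 0 (xs @ False # False # []) + 1 \<le> pot 0 (xs @ a # False # []) \<and>
         pot 0 (xs @ a # False # []) \<le> pot 0 (xs @ False # False # []) + 3"
      by (rule core) (simp add: \<open>a\<close>)
    have e1: "pot 0 (xs @ a # False # []) = pot 0 (xs @ [a])"
      using pot_app_F[of 0 "xs @ [a]" "[]"] by simp
    have e2: "pot 0 (xs @ False # False # []) = pot 0 (xs @ [False])"
      using pot_app_F[of 0 "xs @ [False]" "[]"] by simp
    show ?thesis using c e1 e2 w g by (simp add: kill_last)
  next
    case 3
    define xs where "xs = take (g-1) w"
    define ys where "ys = drop (Suc g) w"
    have w: "w = xs @ w!(g-1) # w!g # ys"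
    proof -
      have "w = take (g-1) w @ drop (g-1) w" by simp
      also have "drop (g-1) w = w!(g-1) # drop g w" using 3 Cons_nth_drop_Suc[of "g-1" w] by simp
      also have "drop g w = w!g # drop (Suc g) w" using 3 Cons_nth_drop_Suc[of g w] by simp
      finally show ?thesis unfolding xs_def ys_def .
    qed
    have lx: "length xs = g - 1" using 3 by (simp add: xs_def)
    have k: "kill g w = xs @ False # False # ys"
      using kill_mid[of xs "w!(g-1)" "w!g" ys] w lx 3 by (metis Suc_pred')
    have "w!(g-1) \<or> w!g" using assms 3 by (auto simp: hits_def)
    from core[OF this, of xs ys] show ?thesis using k w by metis
  qed
qed

definition PW :: "nat \<Rightarrow> nat \<Rightarrow> bool list \<Rightarrow> nat" where
  "PW lo hi w = (if lo = 1 \<and> hi + 1 = length w \<and> (\<forall>x\<in>set w. x) then ffH (length w) else pot 0 w)"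

lemma hits_kill_notall: "hits g w \<Longrightarrow> \<not> (\<forall>x\<in>set (kill g w). x)"
proof -
  assume h: "hits g w"
  show ?thesis
  proof (cases "g < length w")
    case True
    then have "kill g w ! g = False" using True by (cases "g = 0") (auto simp: kill_def)
    then show ?thesis using True by (metis length_kill nth_mem)
  next
    case False
    then have "0 < g" "g - 1 < length w" using h by (auto simp: hits_def)
    then have "kill g w ! (g-1) = False" using False by (simp add: kill_def)
    then show ?thesis using \<open>g - 1 < length w\<close> by (metis length_kill nth_mem)
  qed
qed

lemma kill_rep:
  assumes "1 \<le> g" "g < L"
  shows "kill g (replicate L True) = replicate (g-1) True @ False # False # replicate (L-1-g) True"
proof -
  have "replicate L True = replicate (g-1) True @ True # True # replicate (L-1-g) True"
    using assms by (simp add: replicate_add[symmetric] flip: replicate_Suc)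
  then show ?thesis using kill_mid[of "replicate (g-1) True" True True] assms by (metis Suc_pred' length_replicate less_le_trans zero_less_one)
qed

lemma PW_step:
  assumes "lo \<le> g" "g \<le> hi" "hits g w" "lo \<le> 1" "hi \<le> length w" "length w \<le> hi + 1"
  shows "PW lo hi (kill g w) + 1 \<le> PW lo hi w \<and> PW lo hi w \<le> PW lo hi (kill g w) + 3"
proof -
  have nk: "PW lo hi (kill g w) = pot 0 (kill g w)"
    using hits_kill_notall[OF assms(3)] by (auto simp: PW_def)
  show ?thesis
  proof (cases "lo = 1 \<and> hi + 1 = length w \<and> (\<forall>x\<in>set w. x)")
    case True
    then have w: "w = replicate (length w) True" using replicate_length_same[of w True] by auto
    define L where "L = length w"
    have g: "1 \<le> g" "g < L" using True assms by (auto simp: L_def)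
    have k: "kill g w = replicate (g-1) True @ False # False # replicate (L-1-g) True"
      using kill_rep[OF g] w L_def by metis
    have pk: "pot 0 (kill g w) = ff (g-1) + ff (L-1-g)"
      unfolding k using pot_app_F[of 0 "replicate (g-1) True" "False # replicate (L-1-g) True"] by simp
    have "L = (g-1) + 2 + (L-1-g)" using g by simp
    then have "ff (g-1) + ff (L-1-g) + 1 \<le> ffH L \<and> ffH L \<le> ff (g-1) + ff (L-1-g) + 3"
      using ffHA[of "g-1" "L-1-g"] by simp
    moreover have "PW lo hi w = ffH L" using True by (auto simp: PW_def L_def)
    ultimately show ?thesis using nk pk by simp
  next
    case False
    then have "PW lo hi w = pot 0 w" unfolding PW_def by (rule if_not_P)
    then show ?thesis using nk core_gen[OF assms(3)] assms by simp
  qed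
qed

lemma PW_zero: "PW lo hi w = 0 \<longleftrightarrow> (\<forall>x\<in>set w. \<not> x)"
proof (cases "lo = 1 \<and> hi + 1 = length w \<and> (\<forall>x\<in>set w. x)")
  case True
  then have "w \<noteq> []" by auto
  then obtain x where "x \<in> set w" by (meson list.set_sel(1))
  moreover have "ffH (length w) > 0" using True unfolding ffH_def by auto
  ultimately show ?thesis using True by (auto simp: PW_def)
next
  case False then show ?thesis by (auto simp: PW_def pot_eq0)
qed

lemma ff3: "ff (3*q) = 4*q" "ff (3*q+1) = 4*q+2" "ff (3*q+2) = 4*q+3"
  "ff (Suc (3*q)) = 4*q+2" "ff (Suc (Suc (3*q))) = 4*q+3"
  unfolding ff_def by simp_all

lemma ffH3: "ffH (3*q) = 4*q" "ffH (3*q+1) = 4*q+2" "ffH (3*q+2) = 4*q+2"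
  unfolding ffH_def by presburger+

lemma mod3_cases:
  fixes m :: nat
  obtains q where "m = 3*q" | q where "m = 3*q+1" | q where "m = 3*q+2"
proof -
  have e: "m = 3*(m div 3) + m mod 3" by simp
  consider "m mod 3 = 0" | "m mod 3 = 1" | "m mod 3 = 2" by linarith
  then show ?thesis
  proof cases
    case 1 then show ?thesis using that(1)[of "m div 3"] e by simp
  next
    case 2 then show ?thesis using that(2)[of "m div 3"] e by simp
  next
    case 3 then show ?thesis using that(3)[of "m div 3"] e by simp
  qed
qed

lemma ff_odd: "odd (ff m) \<Longrightarrow> \<exists>q. m = 3*q+2"
  by (cases m rule: mod3_cases) (auto simp: ff3)

lemma run_exists: "(\<exists>x\<in>set w. x) \<Longrightarrow> \<exists>xs m ys. w = xs @ replicate m True @ ys \<and> 1 \<le> m \<and>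
   (xs = [] \<or> last xs = False) \<and> (ys = [] \<or> hd ys = False)"
proof (induction w)
  case Nil then show ?case by simp
next
  case (Cons a w)
  show ?case
  proof (cases a)
    case True
    obtain t ys0 where "w = replicate t True @ ys0" "ys0 = [] \<or> hd ys0 = False"
      using split_lead by blast
    with True show ?thesis by (intro exI[of _ "[]"] exI[of _ "Suc t"] exI[of _ ys0]) auto
  next
    case False
    then have "\<exists>x\<in>set w. x" using Cons by auto
    then obtain xs m ys where "w = xs @ replicate m True @ ys" "1 \<le> m"
      "xs = [] \<or> last xs = False" "ys = [] \<or> hd ys = False" using Cons by blast
    with False show ?thesis by (intro exI[of _ "a#xs"] exI[of _ m] exI[of _ ys]) auto
  qed
qed

lemma run2_exists: "odd (pot 0 w) \<Longrightarrow> \<exists>xs q ys. w = xs @ replicate (3*q+2) True @ ys \<and>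
   (xs = [] \<or> last xs = False) \<and> (ys = [] \<or> hd ys = False)"
proof (induction "length w" arbitrary: w rule: less_induct)
  case less
  have "\<exists>x\<in>set w. x"
  proof (rule ccontr)
    assume "\<not> ?thesis"
    then have "pot 0 w = 0" by (simp add: pot_eq0)
    then show False using less by simp
  qed
  then obtain xs m ys where w: "w = xs @ replicate m True @ ys" "1 \<le> m" and
    bx: "xs = [] \<or> last xs = False" and bY: "ys = [] \<or> hd ys = False" using run_exists by blast
  have p: "pot 0 w = pot 0 xs + ff m + pot 0 ys" using pot_bound[OF bx bY] w by simp
  consider "odd (ff m)" | "odd (pot 0 xs)" | "odd (pot 0 ys)" using less.prems p by auto
  then show ?case
  proof cases
    case 1
    then obtain q where "m = 3*q+2" using ff_odd by blast
    then show ?thesis using w bx bY by blast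
  next
    case 2
    have "length xs < length w" using w by simp
    from less.hyps[OF this 2] obtain a q b where xs: "xs = a @ replicate (3*q+2) True @ b"
      and ba: "a = [] \<or> last a = False" and bb: "b = [] \<or> hd b = False" by blast
    have "b \<noteq> []"
    proof
      assume "b = []"
      then have "last xs = True" using xs by simp
      moreover have "xs \<noteq> []" using xs by simp
      ultimately show False using bx by simp
    qed
    then have "hd (b @ replicate m True @ ys) = False" using bb by simp
    moreover have "w = a @ replicate (3*q+2) True @ (b @ replicate m True @ ys)" using w xs by simp
    ultimately show ?thesis using ba by blast
  next
    case 3
    have "length ys < length w" using w by simp
    from less.hyps[OF this 3] obtain a q b where ys: "ys = a @ replicate (3*q+2) True @ b"
      and ba: "a = [] \<or> last a = False" and bb: "b = [] \<or> hd b = False" by blast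
    have "a \<noteq> []"
    proof
      assume "a = []"
      then have "hd ys = True" using ys by simp
      moreover have "ys \<noteq> []" using ys by simp
      ultimately show False using bY by simp
    qed
    then have "last (xs @ replicate m True @ a) = False" using ba by simp
    moreover have "w = (xs @ replicate m True @ a) @ replicate (3*q+2) True @ b" using w ys by simp
    ultimately show ?thesis using bb by blast
  qed
qed

lemma pot_rep_bound: "ys = [] \<or> hd ys = False \<Longrightarrow> pot 0 (replicate m True @ ys) = ff m + pot 0 ys"
  using pot_bound[of "[]" ys m] by simp

lemma run_moves:
  assumes w: "w = xs @ replicate m True @ ys" and m: "1 \<le> m"
    and bx: "xs = [] \<or> last xs = False" and bY: "ys = [] \<or> hd ys = False"
    and lo: "lo \<le> 1" and hi: "hi \<le> length w" "length w \<le> hi + 1"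
    and nHH: "\<not> (lo = 1 \<and> hi + 1 = length w \<and> (\<forall>x\<in>set w. x))"
  shows "\<exists>g. lo \<le> g \<and> g \<le> hi \<and> hits g w \<and> pot 0 (kill g w) = pot 0 xs + ff (m-1) + pot 0 ys"
    and "2 \<le> m \<Longrightarrow> \<exists>g. lo \<le> g \<and> g \<le> hi \<and> hits g w \<and> pot 0 (kill g w) = pot 0 xs + ff (m-2) + pot 0 ys"
proof -
  assume m2: "2 \<le> m"
  have w2: "w = xs @ True # True # (replicate (m-2) True @ ys)"
    using w m2 by (simp flip: replicate_Suc)
  have k: "kill (Suc (length xs)) w = xs @ False # False # (replicate (m-2) True @ ys)"
    using w2 kill_mid by metis
  have "pot 0 (kill (Suc (length xs)) w) = pot 0 xs + ff (m-2) + pot 0 ys"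
    unfolding k using pot_app_F[of 0 xs] pot_rep_bound[OF bY] by simp
  moreover have "hits (Suc (length xs)) w" using w2 by (simp add: hits_def nth_append)
  moreover have "Suc (length xs) \<le> hi" using w m2 hi by simp
  moreover have "lo \<le> Suc (length xs)" using lo by simp
  ultimately show "\<exists>g. lo \<le> g \<and> g \<le> hi \<and> hits g w \<and> pot 0 (kill g w) = pot 0 xs + ff (m-2) + pot 0 ys"
    by blast
next
  have w1: "w = xs @ True # (replicate (m-1) True @ ys)"
    using w m by (simp flip: replicate_Suc)
  show "\<exists>g. lo \<le> g \<and> g \<le> hi \<and> hits g w \<and> pot 0 (kill g w) = pot 0 xs + ff (m-1) + pot 0 ys"
  proof (cases "lo \<le> length xs")
    case True
    have k: "kill (length xs) w = xs @ False # (replicate (m-1) True @ ys)"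
      using w1 kill_left[OF bx] by metis
    have "pot 0 (kill (length xs) w) = pot 0 xs + ff (m-1) + pot 0 ys"
      unfolding k using pot_app_F[of 0 xs] pot_rep_bound[OF bY] by simp
    moreover have "hits (length xs) w" using w1 by (simp add: hits_def nth_append)
    moreover have "length xs \<le> hi" using w m hi by simp
    ultimately show ?thesis using True by blast
  next
    case False
    then have "length xs = 0" and lo1: "lo = 1" using lo by linarith+
    then have xs: "xs = []" by simp
    have w3: "w = replicate (m-1) True @ True # ys" using w xs m
      by (simp add: replicate_append_same[symmetric]) (metis Suc_pred' One_nat_def Suc_le_eq replicate_Suc replicate_append_same)
    show ?thesis
    proof (cases ys)
      case Nil
      have "\<forall>x\<in>set w. x" using w Nil xs by simp
      then have "hi = m" using nHH lo1 hi w Nil xs by simp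
      have k: "kill m w = replicate (m-1) True @ [False]"
        using kill_last[of "replicate (m-1) True" True] w3 Nil m by simp
      have "pot 0 (kill m w) = ff (m-1)" unfolding k using pot_app_F[of 0 "replicate (m-1) True" "[]"] by simp
      moreover have "hits m w" using w3 Nil m by (simp add: hits_def nth_append)
      ultimately show ?thesis using \<open>hi = m\<close> lo1 m xs Nil by auto
    next
      case (Cons y ys')
      then have y: "y = False" using bY by simp
      have k: "kill m w = replicate (m-1) True @ False # False # ys'"
        using kill_mid[of "replicate (m-1) True" True y ys'] w3 Cons m by simp
      have "pot 0 (kill m w) = ff (m-1) + pot 0 ys"
        unfolding k using pot_app_F[of 0 "replicate (m-1) True" "False # ys'"] Cons y by simp
      moreover have "hits m w" using w3 m by (auto simp: hits_def nth_append)
      moreover have "m \<le> hi" using w xs Cons hi by simp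
      ultimately show ?thesis using lo1 m xs by auto
    qed
  qed
qed

definition goodD :: "nat \<Rightarrow> nat \<Rightarrow> bool" where
  "goodD a b \<longleftrightarrow> a = b + 3 \<or> (a = b + 2 \<and> even a)"
definition goodS :: "nat \<Rightarrow> nat \<Rightarrow> bool" where
  "goodS a b \<longleftrightarrow> a = b + 1 \<or> (a = b + 2 \<and> even a)"

lemma PW_exists:
  assumes lo: "lo \<le> 1" and hi: "hi \<le> length w" "length w \<le> hi + 1" and hh: "lo = 0 \<or> 1 \<le> hi"
    and ex: "\<exists>x\<in>set w. x"
  shows "\<exists>g. lo \<le> g \<and> g \<le> hi \<and> hits g w \<and> goodD (PW lo hi w) (PW lo hi (kill g w))"
    and "\<exists>g. lo \<le> g \<and> g \<le> hi \<and> hits g w \<and> goodS (PW lo hi w) (PW lo hi (kill g w))"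
proof -
  have nk: "hits g w \<Longrightarrow> PW lo hi (kill g w) = pot 0 (kill g w)" for g
    using hits_kill_notall by (auto simp: PW_def)
  have main: "\<exists>g. lo \<le> g \<and> g \<le> hi \<and> hits g w \<and> goodD (PW lo hi w) (PW lo hi (kill g w)) \<and> goodS (PW lo hi w) (PW lo hi (kill g w))"
    if "lo = 1 \<and> hi + 1 = length w \<and> (\<forall>x\<in>set w. x)"
  proof -
    define L where "L = length w"
    have w: "w = replicate L True" using that replicate_length_same[of w True] by (auto simp: L_def)
    have L2: "2 \<le> L" using that hh by (auto simp: L_def)
    have PWw: "PW lo hi w = ffH L" unfolding PW_def L_def by (rule if_P[OF that])
    have ev: "even (ffH L)" by (simp add: ffH_def)
    have pk: "pot 0 (kill g w) = ff (g-1) + ff (L-1-g)" if "1 \<le> g" "g < L" for g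
    proof -
      have k: "kill g w = replicate (g-1) True @ False # False # replicate (L-1-g) True"
        using kill_rep[OF that] w by metis
      show ?thesis
        unfolding k using pot_app_F[of 0 "replicate (g-1) True" "False # replicate (L-1-g) True"] by simp
    qed
    have hg: "hits g w" if "1 \<le> g" "g < L" for g using that w by (auto simp: hits_def)
    obtain g where g: "1 \<le> g" "g < L" "ffH L = ff (g-1) + ff (L-1-g) + 2"
    proof (cases L rule: mod3_cases)
      case (1 q)
      then have "q \<ge> 1" using L2 by simp
      have e: "L-1-1 = 3*(q-1)+1" using 1 \<open>q \<ge> 1\<close> by linarith
      have "ff (L-1-1) = 4*(q-1)+2" unfolding e by (rule ff3(2))
      then have "ffH L = ff (1-1) + ff (L-1-1) + 2" using 1 \<open>q \<ge> 1\<close> ffH3(1)[of q] by simp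
      then show ?thesis using that[of 1] L2 by simp
    next
      case (2 q)
      then have "q \<ge> 1" using L2 by simp
      have e: "L-1-2 = 3*(q-1)+1" using 2 \<open>q \<ge> 1\<close> by linarith
      have "ff (L-1-2) = 4*(q-1)+2" unfolding e by (rule ff3(2))
      moreover have "ff (2-1) = 2" by (simp add: ff_def)
      ultimately have "ffH L = ff (2-1) + ff (L-1-2) + 2" using 2 \<open>q \<ge> 1\<close> ffH3(2)[of q] by simp
      then show ?thesis using that[of 2] 2 \<open>q \<ge> 1\<close> by simp
    next
      case (3 q)
      have e: "L-1-1 = 3*q" using 3 by linarith
      have "ff (L-1-1) = 4*q" unfolding e by (rule ff3(1))
      then have "ffH L = ff (1-1) + ff (L-1-1) + 2" using 3 ffH3(3)[of q] by simp
      then show ?thesis using that[of 1] L2 by simp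
    qed
    show ?thesis using g pk[OF g(1,2)] hg[OF g(1,2)] nk[OF hg[OF g(1,2)]] PWw ev that L_def
      by (intro exI[of _ g]) (auto simp: goodD_def goodS_def)
  qed
  have main2: "(\<exists>g. lo \<le> g \<and> g \<le> hi \<and> hits g w \<and> goodD (PW lo hi w) (PW lo hi (kill g w))) \<and> 
     (\<exists>g. lo \<le> g \<and> g \<le> hi \<and> hits g w \<and> goodS (PW lo hi w) (PW lo hi (kill g w)))"
    if nHH: "\<not> (lo = 1 \<and> hi + 1 = length w \<and> (\<forall>x\<in>set w. x))"
  proof -
    have PWw: "PW lo hi w = pot 0 w" using nHH unfolding PW_def by (rule if_not_P)
    have two: "\<exists>g. lo \<le> g \<and> g \<le> hi \<and> hits g w \<and> goodD (PW lo hi w) (PW lo hi (kill g w)) \<and> goodS (PW lo hi w) (PW lo hi (kill g w))"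
      if r: "w = xs @ replicate m True @ ys" "1 \<le> m" "xs = [] \<or> last xs = False" "ys = [] \<or> hd ys = False"
        and "m mod 3 \<noteq> 2" and "even (pot 0 w)" for xs m ys
    proof -
      note rm = run_moves[OF r lo hi nHH]
      have pw: "pot 0 w = pot 0 xs + ff m + pot 0 ys" using pot_bound[OF r(3,4)] r(1) by simp
      show ?thesis
      proof (cases m rule: mod3_cases)
        case (1 q)
        then have "q \<ge> 1" using r by simp
        have e: "m-2 = 3*(q-1)+1" using 1 \<open>q \<ge> 1\<close> by linarith
        have "ff (m-2) = 4*(q-1)+2" unfolding e by (rule ff3(2))
        then have "ff (m-2) + 2 = ff m" using 1 \<open>q \<ge> 1\<close> ff3(1)[of q] by simp
        moreover obtain g where "lo \<le> g \<and> g \<le> hi \<and> hits g w \<and> pot 0 (kill g w) = pot 0 xs + ff (m-2) + pot 0 ys"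
          using rm(2) 1 \<open>q \<ge> 1\<close> by auto
        ultimately show ?thesis using nk PWw pw \<open>even (pot 0 w)\<close> by (intro exI[of _ g]) (auto simp: goodD_def goodS_def)
      next
        case (2 q)
        have "ff (m-1) + 2 = ff m" using 2 ff3(1)[of q] ff3(2)[of q] by simp
        moreover obtain g where "lo \<le> g \<and> g \<le> hi \<and> hits g w \<and> pot 0 (kill g w) = pot 0 xs + ff (m-1) + pot 0 ys"
          using rm(1) by auto
        ultimately show ?thesis using nk PWw pw \<open>even (pot 0 w)\<close> by (intro exI[of _ g]) (auto simp: goodD_def goodS_def)
      next
        case (3 q) then show ?thesis using \<open>m mod 3 \<noteq> 2\<close> by presburger
      qed
    qed
    have two2: "(\<exists>g. lo \<le> g \<and> g \<le> hi \<and> hits g w \<and> goodD (PW lo hi w) (PW lo hi (kill g w))) \<and> 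
     (\<exists>g. lo \<le> g \<and> g \<le> hi \<and> hits g w \<and> goodS (PW lo hi w) (PW lo hi (kill g w)))"
      if r: "w = xs @ replicate (3*q+2) True @ ys" "xs = [] \<or> last xs = False" "ys = [] \<or> hd ys = False" for xs q ys
    proof -
      note rm = run_moves[OF r(1) _ r(2,3) lo hi nHH]
      have pw: "pot 0 w = pot 0 xs + ff (3*q+2) + pot 0 ys" using pot_bound[OF r(2,3), of "3*q+2"] r(1) by argo
      obtain g where g: "lo \<le> g \<and> g \<le> hi \<and> hits g w \<and> pot 0 (kill g w) = pot 0 xs + ff (3*q) + pot 0 ys"
        using rm(2) by auto
      obtain g' where g': "lo \<le> g' \<and> g' \<le> hi \<and> hits g' w \<and> pot 0 (kill g' w) = pot 0 xs + ff (3*q+1) + pot 0 ys"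
        using rm(1) by auto
      show ?thesis
      proof
        show "\<exists>g. lo \<le> g \<and> g \<le> hi \<and> hits g w \<and> goodD (PW lo hi w) (PW lo hi (kill g w))"
          using g nk PWw pw ff3(1,3)[of q] by (intro exI[of _ g]) (auto simp: goodD_def)
        show "\<exists>g. lo \<le> g \<and> g \<le> hi \<and> hits g w \<and> goodS (PW lo hi w) (PW lo hi (kill g w))"
          using g' nk PWw pw ff3(2,3)[of q] by (intro exI[of _ g']) (auto simp: goodS_def)
      qed
    qed
    show ?thesis
    proof (cases "odd (pot 0 w)")
      case True
      then obtain xs q ys where "w = xs @ replicate (3*q+2) True @ ys" "xs = [] \<or> last xs = False" "ys = [] \<or> hd ys = False"
        using run2_exists by blast
      then show ?thesis using two2 by blast
    next
      case False
      obtain xs m ys where r: "w = xs @ replicate m True @ ys" "1 \<le> m" "xs = [] \<or> last xs = False" "ys = [] \<or> hd ys = False"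
        using run_exists[OF ex] by blast
      show ?thesis
      proof (cases "m mod 3 = 2")
        case True
        then have "m = 3*(m div 3) + 2" by (metis div_mult_mod_eq add.commute mult.commute)
        then show ?thesis using two2[of xs "m div 3" ys] r by metis
      next
        case False
        then show ?thesis using two[OF r False] \<open>\<not> odd (pot 0 w)\<close> by blast
      qed
    qed
  qed
  show "\<exists>g. lo \<le> g \<and> g \<le> hi \<and> hits g w \<and> goodD (PW lo hi w) (PW lo hi (kill g w))"
    using main main2 by blast
  show "\<exists>g. lo \<le> g \<and> g \<le> hi \<and> hits g w \<and> goodS (PW lo hi w) (PW lo hi (kill g w))"
    using main main2 by blast
qed

definition w0 :: "nat \<Rightarrow> nat set \<Rightarrow> bool list" where
  "w0 n D = map (\<lambda>i. 2*i \<notin> D) [0..<(n+1) div 2]"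
definition w1 :: "nat \<Rightarrow> nat set \<Rightarrow> bool list" where
  "w1 n D = map (\<lambda>i. 2*i+1 \<notin> D) [0..<n div 2]"
definition Psi :: "nat \<Rightarrow> nat set \<Rightarrow> nat" where
  "Psi n D = PW 1 (n div 2) (w0 n D) + PW 0 ((n-1) div 2) (w1 n D)"

lemma nbh_path: "nbh (path_V n) path_E v = {u. u < n \<and> (v+1 = u \<or> u+1 = v)}"
  by (auto simp: nbh_def path_V_def path_E_def)

lemma nth_kill: "i < length w \<Longrightarrow> kill g w ! i = (if i = g \<or> (0 < g \<and> i = g-1) then False else w!i)"
  by (auto simp: kill_def nth_list_update)

lemma len_w0[simp]: "length (w0 n D) = (n+1) div 2" by (simp add: w0_def)
lemma len_w1[simp]: "length (w1 n D) = n div 2" by (simp add: w1_def)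
lemma nth_w0: "i < (n+1) div 2 \<Longrightarrow> w0 n D ! i = (2*i \<notin> D)" by (simp add: w0_def)
lemma nth_w1: "i < n div 2 \<Longrightarrow> w1 n D ! i = (2*i+1 \<notin> D)" by (simp add: w1_def)

lemma upd_odd:
  assumes "v = 2*k+1" "v < n"
  shows "w0 n (D \<union> nbh (path_V n) path_E v) = kill (k+1) (w0 n D)"
    and "w1 n (D \<union> nbh (path_V n) path_E v) = w1 n D"
proof -
  show "w0 n (D \<union> nbh (path_V n) path_E v) = kill (k+1) (w0 n D)"
  proof (rule nth_equalityI)
    fix i assume "i < length (w0 n (D \<union> nbh (path_V n) path_E v))"
    then have i: "i < (n+1) div 2" by simp
    then have "2*i < n" by linarith
    then show "w0 n (D \<union> nbh (path_V n) path_E v) ! i = kill (k+1) (w0 n D) ! i"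
      using i assms by (auto simp: nth_kill nth_w0 nbh_path)
  qed simp
  show "w1 n (D \<union> nbh (path_V n) path_E v) = w1 n D"
  proof (rule nth_equalityI)
    fix i assume "i < length (w1 n (D \<union> nbh (path_V n) path_E v))"
    then have i: "i < n div 2" by simp
    then show "w1 n (D \<union> nbh (path_V n) path_E v) ! i = w1 n D ! i"
      using i assms by (auto simp: nth_w1 nbh_path) presburger+
  qed simp
qed

lemma upd_even:
  assumes "v = 2*k" "v < n"
  shows "w1 n (D \<union> nbh (path_V n) path_E v) = kill k (w1 n D)"
    and "w0 n (D \<union> nbh (path_V n) path_E v) = w0 n D"
proof -
  show "w1 n (D \<union> nbh (path_V n) path_E v) = kill k (w1 n D)"
  proof (rule nth_equalityI)
    fix i assume "i < length (w1 n (D \<union> nbh (path_V n) path_E v))"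
    then have i: "i < n div 2" by simp
    then have "2*i+1 < n" by linarith
    then show "w1 n (D \<union> nbh (path_V n) path_E v) ! i = kill k (w1 n D) ! i"
      using i assms by (auto simp: nth_kill nth_w1 nbh_path)
  qed simp
  show "w0 n (D \<union> nbh (path_V n) path_E v) = w0 n D"
  proof (rule nth_equalityI)
    fix i assume "i < length (w0 n (D \<union> nbh (path_V n) path_E v))"
    then have i: "i < (n+1) div 2" by simp
    then show "w0 n (D \<union> nbh (path_V n) path_E v) ! i = w0 n D ! i"
      using i assms by (auto simp: nth_w0 nbh_path) presburger+
  qed simp
qed

lemma legal_path: "legal (path_V n) path_E D v \<longleftrightarrow> v < n \<and> (\<exists>u. u < n \<and> (v+1 = u \<or> u+1 = v) \<and> u \<notin> D)"
  unfolding legal_def nbh_path by (auto simp: path_V_def)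

lemma legal_odd:
  assumes "v = 2*k+1" "v < n"
  shows "legal (path_V n) path_E D v \<longleftrightarrow> hits (k+1) (w0 n D)"
proof -
  have "legal (path_V n) path_E D v \<longleftrightarrow> (2*k+2 < n \<and> 2*k+2 \<notin> D) \<or> 2*k \<notin> D"
    unfolding legal_path using assms apply auto
    subgoal by (rule exI[of _ "2*k"]) simp
    done
  also have "\<dots> \<longleftrightarrow> hits (k+1) (w0 n D)"
  proof -
    have a: "k < (n+1) div 2" using assms by linarith
    have b: "k+1 < (n+1) div 2 \<longleftrightarrow> 2*k+2 < n" by linarith
    show ?thesis using a b by (auto simp: hits_def nth_w0)
  qed
  finally show ?thesis .
qed

lemma legal_even:
  assumes "v = 2*k" "v < n"
  shows "legal (path_V n) path_E D v \<longleftrightarrow> hits k (w1 n D)"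
proof -
  have "legal (path_V n) path_E D v \<longleftrightarrow> (2*k+1 < n \<and> 2*k+1 \<notin> D) \<or> (0 < k \<and> 2*(k-1)+1 \<notin> D)"
    unfolding legal_path using assms apply (cases k) apply auto
    subgoal for m by (rule exI[of _ "Suc (2*m)"]) simp
    done
  also have "\<dots> \<longleftrightarrow> hits k (w1 n D)"
  proof -
    have a: "0 < k \<Longrightarrow> k - 1 < n div 2" using assms by linarith
    have b: "k < n div 2 \<longleftrightarrow> 2*k+1 < n" by linarith
    show ?thesis using a b by (auto simp: hits_def nth_w1)
  qed
  finally show ?thesis .
qed

abbreviation NB :: "nat \<Rightarrow> nat \<Rightarrow> nat set" where "NB n v \<equiv> nbh (path_V n) path_E v"

lemma Psi_step:
  assumes leg: "legal (path_V n) path_E D v"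
  shows "Psi n (D \<union> NB n v) + 1 \<le> Psi n D \<and> Psi n D \<le> Psi n (D \<union> NB n v) + 3"
proof -
  have vn: "v < n" using leg by (simp add: legal_path)
  show ?thesis
  proof (cases "even v")
    case True
    then obtain k where v: "v = 2*k" by blast
    have h: "hits k (w1 n D)" using legal_even[OF v vn] leg by simp
    have "PW 0 ((n-1) div 2) (kill k (w1 n D)) + 1 \<le> PW 0 ((n-1) div 2) (w1 n D) \<and>
          PW 0 ((n-1) div 2) (w1 n D) \<le> PW 0 ((n-1) div 2) (kill k (w1 n D)) + 3"
      by (rule PW_step) (use h v vn in auto)
    then show ?thesis using upd_even[OF v vn, of D] by (simp add: Psi_def)
  next
    case False
    then obtain k where v: "v = 2*k+1" by (metis oddE)
    have h: "hits (k+1) (w0 n D)" using legal_odd[OF v vn] leg by simp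
    have "PW 1 (n div 2) (kill (k+1) (w0 n D)) + 1 \<le> PW 1 (n div 2) (w0 n D) \<and>
          PW 1 (n div 2) (w0 n D) \<le> PW 1 (n div 2) (kill (k+1) (w0 n D)) + 3"
      by (rule PW_step) (use h v vn in auto)
    then show ?thesis using upd_odd[OF v vn, of D] by (simp add: Psi_def)
  qed
qed

lemma goodD_add: "goodD a b \<Longrightarrow> odd a \<or> even (a+c) \<Longrightarrow> goodD (a+c) (b+c) \<and> goodD (c+a) (c+b)"
  unfolding goodD_def by auto
lemma goodS_add: "goodS a b \<Longrightarrow> odd a \<or> even (a+c) \<Longrightarrow> goodS (a+c) (b+c) \<and> goodS (c+a) (c+b)"
  unfolding goodS_def by auto

lemma class0_move:
  assumes "2 \<le> n" "\<exists>x\<in>set (w0 n D). x" 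
  shows "\<exists>v. legal (path_V n) path_E D v \<and> goodD (PW 1 (n div 2) (w0 n D)) (PW 1 (n div 2) (w0 n (D \<union> NB n v)))
             \<and> w1 n (D \<union> NB n v) = w1 n D"
    and "\<exists>v. legal (path_V n) path_E D v \<and> goodS (PW 1 (n div 2) (w0 n D)) (PW 1 (n div 2) (w0 n (D \<union> NB n v)))
             \<and> w1 n (D \<union> NB n v) = w1 n D"
proof -
  have pre: "(1::nat) \<le> 1" "n div 2 \<le> length (w0 n D)" "length (w0 n D) \<le> n div 2 + 1" "1 = (0::nat) \<or> 1 \<le> n div 2"
    using assms by auto
  have conv: "\<And>g. 1 \<le> g \<Longrightarrow> g \<le> n div 2 \<Longrightarrow> hits g (w0 n D) \<Longrightarrow>
     legal (path_V n) path_E D (2*(g-1)+1) \<and> w0 n (D \<union> NB n (2*(g-1)+1)) = kill g (w0 n D)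
     \<and> w1 n (D \<union> NB n (2*(g-1)+1)) = w1 n D"
  proof -
    fix g :: nat assume g: "1 \<le> g" "g \<le> n div 2" "hits g (w0 n D)"
    have vn: "2*(g-1)+1 < n" using g by linarith
    have gg: "g - 1 + 1 = g" using g by simp
    show "legal (path_V n) path_E D (2*(g-1)+1) \<and> w0 n (D \<union> NB n (2*(g-1)+1)) = kill g (w0 n D)
     \<and> w1 n (D \<union> NB n (2*(g-1)+1)) = w1 n D"
      using legal_odd[OF refl vn, of D] upd_odd[OF refl vn, of D] g gg by simp
  qed
  obtain g where g: "1 \<le> g" "g \<le> n div 2" "hits g (w0 n D)" "goodD (PW 1 (n div 2) (w0 n D)) (PW 1 (n div 2) (kill g (w0 n D)))"
    using PW_exists(1)[OF pre assms(2)] by blast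
  show "\<exists>v. legal (path_V n) path_E D v \<and> goodD (PW 1 (n div 2) (w0 n D)) (PW 1 (n div 2) (w0 n (D \<union> NB n v)))
             \<and> w1 n (D \<union> NB n v) = w1 n D"
    using conv[OF g(1-3)] g(4) by (intro exI[of _ "2*(g-1)+1"]) simp
  obtain g where g: "1 \<le> g" "g \<le> n div 2" "hits g (w0 n D)" "goodS (PW 1 (n div 2) (w0 n D)) (PW 1 (n div 2) (kill g (w0 n D)))"
    using PW_exists(2)[OF pre assms(2)] by blast
  show "\<exists>v. legal (path_V n) path_E D v \<and> goodS (PW 1 (n div 2) (w0 n D)) (PW 1 (n div 2) (w0 n (D \<union> NB n v)))
             \<and> w1 n (D \<union> NB n v) = w1 n D"
    using conv[OF g(1-3)] g(4) by (intro exI[of _ "2*(g-1)+1"]) simp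
qed

lemma class1_move:
  assumes "\<exists>x\<in>set (w1 n D). x" 
  shows "\<exists>v. legal (path_V n) path_E D v \<and> goodD (PW 0 ((n-1) div 2) (w1 n D)) (PW 0 ((n-1) div 2) (w1 n (D \<union> NB n v)))
             \<and> w0 n (D \<union> NB n v) = w0 n D"
    and "\<exists>v. legal (path_V n) path_E D v \<and> goodS (PW 0 ((n-1) div 2) (w1 n D)) (PW 0 ((n-1) div 2) (w1 n (D \<union> NB n v)))
             \<and> w0 n (D \<union> NB n v) = w0 n D"
proof -
  have pre: "(0::nat) \<le> 1" "(n-1) div 2 \<le> length (w1 n D)" "length (w1 n D) \<le> (n-1) div 2 + 1" "0 = (0::nat) \<or> 1 \<le> (n-1) div 2"
    by auto
  have conv: "\<And>g. g \<le> (n-1) div 2 \<Longrightarrow> hits g (w1 n D) \<Longrightarrow>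
     legal (path_V n) path_E D (2*g) \<and> w1 n (D \<union> NB n (2*g)) = kill g (w1 n D)
     \<and> w0 n (D \<union> NB n (2*g)) = w0 n D"
  proof -
    fix g :: nat assume g: "g \<le> (n-1) div 2" "hits g (w1 n D)"
    have "n \<noteq> 0" using g by (auto simp: hits_def)
    then have vn: "2*g < n" using g by linarith
    show "legal (path_V n) path_E D (2*g) \<and> w1 n (D \<union> NB n (2*g)) = kill g (w1 n D)
     \<and> w0 n (D \<union> NB n (2*g)) = w0 n D"
      using legal_even[OF refl vn, of D] upd_even[OF refl vn, of D] g by simp
  qed
  obtain g where g: "0 \<le> g" "g \<le> (n-1) div 2" "hits g (w1 n D)" "goodD (PW 0 ((n-1) div 2) (w1 n D)) (PW 0 ((n-1) div 2) (kill g (w1 n D)))"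
    using PW_exists(1)[OF pre assms] by blast
  show "\<exists>v. legal (path_V n) path_E D v \<and> goodD (PW 0 ((n-1) div 2) (w1 n D)) (PW 0 ((n-1) div 2) (w1 n (D \<union> NB n v)))
             \<and> w0 n (D \<union> NB n v) = w0 n D"
    using conv[OF g(2,3)] g(4) by (intro exI[of _ "2*g"]) simp
  obtain g where g: "0 \<le> g" "g \<le> (n-1) div 2" "hits g (w1 n D)" "goodS (PW 0 ((n-1) div 2) (w1 n D)) (PW 0 ((n-1) div 2) (kill g (w1 n D)))"
    using PW_exists(2)[OF pre assms] by blast
  show "\<exists>v. legal (path_V n) path_E D v \<and> goodS (PW 0 ((n-1) div 2) (w1 n D)) (PW 0 ((n-1) div 2) (w1 n (D \<union> NB n v)))
             \<and> w0 n (D \<union> NB n v) = w0 n D"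
    using conv[OF g(2,3)] g(4) by (intro exI[of _ "2*g"]) simp
qed

lemma Psi_exists:
  assumes "2 \<le> n" "Psi n D \<noteq> 0"
  shows "\<exists>v. legal (path_V n) path_E D v \<and> goodD (Psi n D) (Psi n (D \<union> NB n v))"
    and "\<exists>v. legal (path_V n) path_E D v \<and> goodS (Psi n D) (Psi n (D \<union> NB n v))"
proof -
  define a0 where "a0 = PW 1 (n div 2) (w0 n D)"
  define a1 where "a1 = PW 0 ((n-1) div 2) (w1 n D)"
  have Ps: "Psi n D = a0 + a1" by (simp add: Psi_def a0_def a1_def)
  have c: "(a0 \<noteq> 0 \<and> (odd a0 \<or> even (a0+a1))) \<or> (a1 \<noteq> 0 \<and> (odd a1 \<or> even (a1+a0)))"
  proof (cases "a0 = 0")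
    case True then show ?thesis using assms(2) Ps by simp
  next
    case False
    show ?thesis
    proof (cases "odd a0 \<or> even (a0+a1)")
      case True then show ?thesis using False by blast
    next
      case F2: False
      then have "odd a1" by simp
      then have "a1 \<noteq> 0" by (metis odd_pos less_numeral_extra(3))
      then show ?thesis using \<open>odd a1\<close> by blast
    qed
  qed
  then have "(\<exists>v. legal (path_V n) path_E D v \<and> goodD (Psi n D) (Psi n (D \<union> NB n v))) \<and>
    (\<exists>v. legal (path_V n) path_E D v \<and> goodS (Psi n D) (Psi n (D \<union> NB n v)))"
  proof
    assume h: "a0 \<noteq> 0 \<and> (odd a0 \<or> even (a0+a1))"
    then have ex: "\<exists>x\<in>set (w0 n D). x" using PW_zero[of 1 "n div 2" "w0 n D"] unfolding a0_def by auto
    obtain v where v: "legal (path_V n) path_E D v" "goodD a0 (PW 1 (n div 2) (w0 n (D \<union> NB n v)))"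
       "w1 n (D \<union> NB n v) = w1 n D" using class0_move(1)[OF assms(1) ex] unfolding a0_def by (elim exE) blast
    obtain v' where v': "legal (path_V n) path_E D v'" "goodS a0 (PW 1 (n div 2) (w0 n (D \<union> NB n v')))"
       "w1 n (D \<union> NB n v') = w1 n D" using class0_move(2)[OF assms(1) ex] unfolding a0_def by (elim exE) blast
    show ?thesis using v v' goodD_add[OF v(2), of a1] goodS_add[OF v'(2), of a1] h Ps
      by (auto simp: Psi_def a1_def)
  next
    assume h: "a1 \<noteq> 0 \<and> (odd a1 \<or> even (a1+a0))"
    then have ex: "\<exists>x\<in>set (w1 n D). x" using PW_zero[of 0 "(n-1) div 2" "w1 n D"] unfolding a1_def by auto
    obtain v where v: "legal (path_V n) path_E D v" "goodD a1 (PW 0 ((n-1) div 2) (w1 n (D \<union> NB n v)))"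
       "w0 n (D \<union> NB n v) = w0 n D" using class1_move(1)[OF ex] unfolding a1_def by (elim exE) blast
    obtain v' where v': "legal (path_V n) path_E D v'" "goodS a1 (PW 0 ((n-1) div 2) (w1 n (D \<union> NB n v')))"
       "w0 n (D \<union> NB n v') = w0 n D" using class1_move(2)[OF ex] unfolding a1_def by (elim exE) blast
    show ?thesis using v v' goodD_add[OF v(2), of a0] goodS_add[OF v'(2), of a0] h Ps
      by (auto simp: Psi_def a0_def)
  qed
  then show "\<exists>v. legal (path_V n) path_E D v \<and> goodD (Psi n D) (Psi n (D \<union> NB n v))"
    and "\<exists>v. legal (path_V n) path_E D v \<and> goodS (Psi n D) (Psi n (D \<union> NB n v))" by blast+
qed

lemma Psi_zero_iff:
  assumes "2 \<le> n"
  shows "Psi n D = 0 \<longleftrightarrow> (\<forall>v. \<not> legal (path_V n) path_E D v)"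
proof
  assume z: "Psi n D = 0"
  show "\<forall>v. \<not> legal (path_V n) path_E D v"
  proof (intro allI notI)
    fix v assume "legal (path_V n) path_E D v"
    from Psi_step[OF this] z show False by simp
  qed
next
  assume "\<forall>v. \<not> legal (path_V n) path_E D v"
  then show "Psi n D = 0" using Psi_exists(1)[OF assms] by blast
qed

lemma arD1: "(a::nat) \<le> b + 3 \<Longrightarrow> a div 2 \<le> 1 + (b+1) div 2" by linarith
lemma arD2: "goodD a b \<Longrightarrow> 1 + (b+1) div 2 = a div 2" unfolding goodD_def by presburger
lemma arS1: "(b::nat) + 1 \<le> a \<Longrightarrow> 1 + b div 2 \<le> (a+1) div 2" by linarith
lemma arS2: "goodS a b \<Longrightarrow> 1 + b div 2 = (a+1) div 2" unfolding goodS_def by presburger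

lemma card_step:
  assumes "legal (path_V n) path_E D v" "card ({0..<n} - D) \<le> Suc k"
  shows "card ({0..<n} - (D \<union> NB n v)) \<le> k"
proof -
  from assms(1) obtain u where u: "u \<in> NB n v" "u \<notin> D" by (auto simp: legal_def)
  have sub: "NB n v \<subseteq> {0..<n}" by (auto simp: nbh_path)
  have "{0..<n} - (D \<union> NB n v) \<subset> {0..<n} - D" using u sub by auto
  then have "card ({0..<n} - (D \<union> NB n v)) < card ({0..<n} - D)" by (rule psubset_card_mono[rotated]) simp
  then show ?thesis using assms(2) by simp
qed

lemma gval_formula:
  assumes n: "2 \<le> n"
  shows "card ({0..<n} - D) \<le> k \<Longrightarrow>
    gval (path_V n) path_E k d D = (if d then Psi n D div 2 else (Psi n D + 1) div 2)"
proof (induction k arbitrary: d D)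
  case 0
  then have "{0..<n} \<subseteq> D" by auto
  then have "\<forall>v. \<not> legal (path_V n) path_E D v"
    by (auto simp: legal_path subset_iff)
  then have "Psi n D = 0" using Psi_zero_iff[OF n] by blast
  then show ?case by simp
next
  case (Suc k)
  define M where "M = {v. legal (path_V n) path_E D v}"
  have finM: "finite M" unfolding M_def by (rule finite_subset[of _ "{0..<n}"]) (auto simp: legal_path)
  have IH: "\<And>v d'. v \<in> M \<Longrightarrow> gval (path_V n) path_E k d' (D \<union> NB n v) =
     (if d' then Psi n (D \<union> NB n v) div 2 else (Psi n (D \<union> NB n v) + 1) div 2)"
    using Suc.IH card_step Suc.prems unfolding M_def by blast
  show ?case
  proof (cases "M = {}")
    case True
    then have "Psi n D = 0" using Psi_zero_iff[OF n] unfolding M_def by blast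
    then show ?thesis using True unfolding M_def by simp
  next
    case False
    then have P0: "Psi n D \<noteq> 0" using Psi_zero_iff[OF n] unfolding M_def by blast
    show ?thesis
    proof (cases d)
      case True
      have "Min ((\<lambda>v. 1 + gval (path_V n) path_E k False (D \<union> NB n v)) ` M) = Psi n D div 2"
      proof (rule Min_eqI)
        show "finite ((\<lambda>v. 1 + gval (path_V n) path_E k False (D \<union> NB n v)) ` M)" using finM by simp
      next
        fix y assume "y \<in> (\<lambda>v. 1 + gval (path_V n) path_E k False (D \<union> NB n v)) ` M"
        then obtain v where v: "v \<in> M" "y = 1 + gval (path_V n) path_E k False (D \<union> NB n v)" by blast
        have "Psi n D \<le> Psi n (D \<union> NB n v) + 3" using Psi_step v(1) unfolding M_def by blast
        then show "Psi n D div 2 \<le> y" using v IH[OF v(1), of False] arD1 by simp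
      next
        obtain v where v: "legal (path_V n) path_E D v" "goodD (Psi n D) (Psi n (D \<union> NB n v))"
          using Psi_exists(1)[OF n P0] by blast
        then have "v \<in> M" unfolding M_def by simp
        then show "Psi n D div 2 \<in> (\<lambda>v. 1 + gval (path_V n) path_E k False (D \<union> NB n v)) ` M"
          using IH[OF \<open>v \<in> M\<close>, of False] arD2[OF v(2)] by (intro image_eqI[of _ _ v]) simp_all
      qed
      then show ?thesis using True False unfolding M_def by auto
    next
      case dF: False
      have "Max ((\<lambda>v. 1 + gval (path_V n) path_E k True (D \<union> NB n v)) ` M) = (Psi n D + 1) div 2"
      proof (rule Max_eqI)
        show "finite ((\<lambda>v. 1 + gval (path_V n) path_E k True (D \<union> NB n v)) ` M)" using finM by simp
      next
        fix y assume "y \<in> (\<lambda>v. 1 + gval (path_V n) path_E k True (D \<union> NB n v)) ` M"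
        then obtain v where v: "v \<in> M" "y = 1 + gval (path_V n) path_E k True (D \<union> NB n v)" by blast
        have "Psi n (D \<union> NB n v) + 1 \<le> Psi n D" using Psi_step v(1) unfolding M_def by blast
        then show "y \<le> (Psi n D + 1) div 2" using v IH[OF v(1), of True] arS1 by simp
      next
        obtain v where v: "legal (path_V n) path_E D v" "goodS (Psi n D) (Psi n (D \<union> NB n v))"
          using Psi_exists(2)[OF n P0] by blast
        then have "v \<in> M" unfolding M_def by simp
        then show "(Psi n D + 1) div 2 \<in> (\<lambda>v. 1 + gval (path_V n) path_E k True (D \<union> NB n v)) ` M"
          using IH[OF \<open>v \<in> M\<close>, of True] arS2[OF v(2)] by (intro image_eqI[of _ _ v]) simp_all
      qed
      then show ?thesis using dF False unfolding M_def by auto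
    qed
  qed
qed

lemma rep_upd: "i < L \<Longrightarrow> (replicate L True)[i := False] = replicate i True @ False # replicate (L-1-i) True"
proof -
  assume i: "i < L"
  have "replicate L True = replicate i True @ True # replicate (L-1-i) True"
    using i by (simp flip: replicate_Suc replicate_add)
  then show ?thesis by (simp add: list_update_append)
qed

lemma pot_single: "pot 0 (replicate i True @ False # replicate j True) = ff i + ff j"
  using pot_app_F[of 0 "replicate i True" "replicate j True"] by simp

lemma w0_empty: "w0 n {} = replicate ((n+1) div 2) True"
  by (rule nth_equalityI) (simp_all add: nth_w0)
lemma w1_empty: "w1 n {} = replicate (n div 2) True"
  by (rule nth_equalityI) (simp_all add: nth_w1)

lemma w0_even: "i < (n+1) div 2 \<Longrightarrow> w0 n {2*i} = (replicate ((n+1) div 2) True)[i := False]"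
  by (rule nth_equalityI) (auto simp: nth_w0 nth_list_update)
lemma w1_even: "w1 n {2*i} = replicate (n div 2) True"
proof (rule nth_equalityI)
  fix j assume "j < length (w1 n {2*i})"
  moreover have "2*j+1 \<noteq> 2*i" by presburger
  ultimately show "w1 n {2*i} ! j = replicate (n div 2) True ! j" by (simp add: nth_w1)
qed simp
lemma w1_odd: "i < n div 2 \<Longrightarrow> w1 n {2*i+1} = (replicate (n div 2) True)[i := False]"
  by (rule nth_equalityI) (auto simp: nth_w1 nth_list_update)
lemma w0_odd: "w0 n {2*i+1} = replicate ((n+1) div 2) True"
proof (rule nth_equalityI)
  fix j assume "j < length (w0 n {2*i+1})"
  moreover have "2*j \<noteq> 2*i+1" by presburger
  ultimately show "w0 n {2*i+1} ! j = replicate ((n+1) div 2) True ! j" by (simp add: nth_w0)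
qed simp

lemma PW_allT0: "PW 1 (n div 2) (replicate ((n+1) div 2) True) = (if odd n then ffH ((n+1) div 2) else ff ((n+1) div 2))"
proof (cases "odd n")
  case True
  then have "n div 2 + 1 = (n+1) div 2" by presburger
  then show ?thesis using True by (simp add: PW_def)
next
  case False
  then have "n div 2 + 1 \<noteq> (n+1) div 2" by presburger
  then show ?thesis using False by (simp add: PW_def)
qed

lemma PW_allT1: "PW 0 h (replicate L True) = ff L"
  by (simp add: PW_def)

lemma PW_single: "PW lo h (replicate i True @ False # replicate j True) = ff i + ff j"
  by (simp add: PW_def pot_single)

lemma Psi_empty: "Psi n {} = (if odd n then ffH ((n+1) div 2) else ff ((n+1) div 2)) + ff (n div 2)"
  unfolding Psi_def w0_empty w1_empty PW_allT0 PW_allT1 by (rule refl)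

lemma Psi_even: "i < (n+1) div 2 \<Longrightarrow> Psi n {2*i} = ff i + ff ((n+1) div 2 - 1 - i) + ff (n div 2)"
  unfolding Psi_def by (simp only: w0_even w1_even rep_upd PW_single PW_allT1)

lemma Psi_odd: "i < n div 2 \<Longrightarrow> Psi n {2*i+1} = (if odd n then ffH ((n+1) div 2) else ff ((n+1) div 2)) + ff i + ff (n div 2 - 1 - i)"
  unfolding Psi_def by (simp only: w0_odd w1_odd rep_upd PW_single PW_allT0 add.assoc)

lemma gamma_vals:
  assumes "2 \<le> n"
  shows "gamma_tg (path_V n) path_E = Psi n {} div 2"
    and "v < n \<Longrightarrow> gamma_tg_decl (path_V n) path_E v = Psi n {v} div 2"
proof -
  have c: "card (path_V n) = n" by (simp add: path_V_def)
  show "gamma_tg (path_V n) path_E = Psi n {} div 2"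
    unfolding gamma_tg_def c using gval_formula[OF assms, of "{}" n True] by simp
  show "v < n \<Longrightarrow> gamma_tg_decl (path_V n) path_E v = Psi n {v} div 2"
    unfolding gamma_tg_decl_def c using gval_formula[OF assms, of "{v}" n True]
    by (simp add: card_Diff_subset)
qed

lemma crit_iff:
  assumes "2 \<le> n"
  shows "tg_critical (path_V n) path_E \<longleftrightarrow> (\<forall>v<n. Psi n {v} div 2 < Psi n {} div 2)"
  unfolding tg_critical_def using gamma_vals[OF assms] by (auto simp: path_V_def)

lemma div_aux: "(a::nat) \<le> b + 1 \<Longrightarrow> \<not> (b + b) div 2 < (a + b) div 2" by presburger

lemma ff_gt: "m mod 3 \<noteq> 0 \<Longrightarrow> 4*m < 3 * ff m"
  by (cases m rule: mod3_cases) (auto simp: ff3)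

theorem theorem3p1:
  fixes n :: nat
  assumes "n \<ge> 2"
  shows "tg_critical (path_V n) path_E \<longleftrightarrow> n mod 6 \<in> {2, 4}"
proof (cases "even n")
  case True
  then obtain m where n: "n = 2*m" by blast
  have m1: "1 \<le> m" using n assms by simp
  have L0: "(n+1) div 2 = m" and L1: "n div 2 = m" using n by simp_all
  have Pe: "Psi n {} = ff m + ff m" using Psi_empty[of n] L0 L1 True by simp
  have Pv: "Psi n {v} = ff m + ff (v div 2) + ff (m - 1 - v div 2)" if "v < n" for v
  proof (cases "even v")
    case True
    then obtain i where v: "v = 2*i" by blast
    then have "i < (n+1) div 2" using that n by simp
    then show ?thesis using Psi_even[of i n] v L0 L1 by simp
  next
    case False
    then obtain i where v: "v = 2*i+1" by (metis oddE)
    then have "i < n div 2" using that n by simp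
    then show ?thesis using Psi_odd[of i n] v L0 L1 \<open>even n\<close> by simp
  qed
  show ?thesis
  proof
    assume c: "tg_critical (path_V n) path_E"
    show "n mod 6 \<in> {2, 4}"
    proof (rule ccontr)
      assume "n mod 6 \<notin> {2, 4}"
      then have "m mod 3 = 0" using n by auto presburger
      then obtain q where q: "m = 3*q" by blast
      then have q1: "1 \<le> q" using m1 by simp
      have "2 < n" using q1 q n by simp
      have e: "m - 1 - 1 = 3*(q-1)+1" using q q1 by simp
      have "ff (m-1-1) = 4*(q-1)+2" unfolding e by (rule ff3(2))
      then have "Psi n {2} = Psi n {}" using Pv[OF \<open>2 < n\<close>] Pe q q1 ff3(1)[of q]
        by (simp add: ff_def)
      moreover have "Psi n {2} div 2 < Psi n {} div 2" using c \<open>2 < n\<close> crit_iff[OF assms] by blast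
      ultimately show False by simp
    qed
  next
    assume "n mod 6 \<in> {2, 4}"
    then have mm: "m mod 3 \<noteq> 0" using n by auto presburger+
    have "Psi n {v} div 2 < Psi n {} div 2" if "v < n" for v
    proof -
      define i where "i = v div 2"
      have i: "i < m" using that n i_def by simp
      have "4*i \<le> 3*ff i" "3*ff i \<le> 4*i+2" "4*(m-1-i) \<le> 3*ff (m-1-i)" "3*ff (m-1-i) \<le> 4*(m-1-i)+2"
        using ffb by blast+
      moreover have "4*m < 3*ff m" using ff_gt[OF mm] .
      moreover have "4*(m-1-i) = 4*m - 4 - 4*i" using i by simp
      ultimately have "ff i + ff (m-1-i) < ff m" using i by linarith
      then show ?thesis using Pv[OF that] Pe i_def by simp linarith
    qed
    then show "tg_critical (path_V n) path_E" using crit_iff[OF assms] by blast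
  qed
next
  case False
  then obtain m where n: "n = 2*m+1" by (metis oddE)
  have m1: "1 \<le> m" using n assms by simp
  have L0: "(n+1) div 2 = m+1" and L1: "n div 2 = m" using n by simp_all
  have Pe: "Psi n {} = ffH (m+1) + ff m" using Psi_empty[of n] L0 L1 False by simp
  have nm: "n mod 6 \<notin> {2,4}" using False by auto presburger+
  have "\<not> tg_critical (path_V n) path_E"
  proof (cases "m mod 3 = 0")
    case True
    then obtain q where q: "m = 3*q" by blast
    then have q1: "1 \<le> q" using m1 by simp
    have "3 < n" using q1 q n by simp
    have "1 < n div 2" using L1 q q1 by simp
    then have P3: "Psi n {2*1+1} = ffH (m+1) + ff 1 + ff (m - 1 - 1)"
      using Psi_odd[of 1 n] L0 L1 False by simp
    have e: "m - 1 - 1 = 3*(q-1)+1" using q q1 by simp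
    have "ff (m-1-1) = 4*(q-1)+2" unfolding e by (rule ff3(2))
    moreover have "ff 1 = 2" by (simp add: ff_def)
    moreover have "ffH (m+1) = 4*q+2" using q ffH3(2)[of q] by simp
    moreover have "ff m = 4*q" using q ff3(1)[of q] by simp
    ultimately have "Psi n {3} = Psi n {}" using P3 Pe q1 by simp
    then show ?thesis using crit_iff[OF assms] \<open>3 < n\<close> by force
  next
    case mF: False
    have "0 < (n+1) div 2" using L0 by simp
    then have "Psi n {2*0} = ff 0 + ff ((n+1) div 2 - 1 - 0) + ff (n div 2)" by (rule Psi_even)
    then have P0: "Psi n {0} = ff m + ff m" using L0 L1 by simp
    have "ffH (m+1) \<le> ff m + 1"
    proof (cases m rule: mod3_cases)
      case (1 q) then show ?thesis using mF by simp
    next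
      case (2 q) then show ?thesis using ffH3(3)[of q] ff3(2)[of q] by simp
    next
      case (3 q)
      have e: "m + 1 = 3*(q+1)" using 3 by simp
      have "ffH (m+1) = 4*(q+1)" unfolding e by (rule ffH3(1))
      then show ?thesis using 3 ff3(3)[of q] by simp
    qed
    then have "\<not> Psi n {0} div 2 < Psi n {} div 2" unfolding P0 Pe by (rule div_aux)
    then show ?thesis using crit_iff[OF assms] \<open>0 < (n+1) div 2\<close> n by force
  qed
  then show ?thesis using nm by blast
qed

end
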